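(* Let $p$ be a state with $p\neq g$ (equivalently, the slopes $p_i/g_i$ of $\beta(p)$ are not all equal). Then the Gibbs state $g$ lies in the interior of $p^{TP}=\{Tp:T\in TP(d)\}$, taken relative to the affine hyperplane $\{x\in\mathbb{R}^d:\sum_i x_i=1\}$.
   Context: Fix $d\ge 2$, $\beta\in(0,\infty)$ and pairwise distinct reals $E_0=0,E_1,\dots,E_{d-1}$. Put $q_{m,n}=e^{-\beta(E_m-E_n)}$, $Z=\sum_j q_{j,0}$, and the Gibbs vector $g_i=q_{i,0}/Z$. A state is a probability vector in $\mathbb{R}^d$. $TP(d)$ is the set of $d\times d$ real matrices with non-negative entries, columns summing to $1$, and $Tg=g$. The thermomajorization curve $\beta(p)$ of a state $p$ is the concave piecewise-linear curve from $(0,0)$ to $(1,1)$ whose segments have horizontal lengths $g_i$ and slopes $p_i/g_i$, arranged in non-increasing order of slope. *)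

theory Defs
  imports "HOL-Analysis.Analysis"
begin

text \<open>Energies are indexed by a finite type 'n (d = CARD('n)); the index i0 plays the role
of the ground level 0 with E i0 = 0.\<close>

definition qfac :: "real \<Rightarrow> ('n \<Rightarrow> real) \<Rightarrow> 'n \<Rightarrow> 'n \<Rightarrow> real" where
  "qfac \<beta> E m n = exp (- \<beta> * (E m - E n))"

definition partition_fn :: "real \<Rightarrow> ('n::finite \<Rightarrow> real) \<Rightarrow> 'n \<Rightarrow> real" where
  "partition_fn \<beta> E i0 = (\<Sum>j\<in>UNIV. qfac \<beta> E j i0)"

definition gibbs :: "real \<Rightarrow> ('n::finite \<Rightarrow> real) \<Rightarrow> 'n \<Rightarrow> real^'n" where
  "gibbs \<beta> E i0 = (\<chi> i. qfac \<beta> E i i0 / partition_fn \<beta> E i0)"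

definition is_state :: "real^'n::finite \<Rightarrow> bool" where
  "is_state p \<longleftrightarrow> (\<forall>i. 0 \<le> p $ i) \<and> (\<Sum>i\<in>UNIV. p $ i) = 1"

definition TP :: "real \<Rightarrow> ('n::finite \<Rightarrow> real) \<Rightarrow> 'n \<Rightarrow> (real^'n^'n) set" where
  "TP \<beta> E i0 = {T. (\<forall>i j. 0 \<le> T $ i $ j) \<and> (\<forall>j. (\<Sum>i\<in>UNIV. T $ i $ j) = 1)
                     \<and> T *v gibbs \<beta> E i0 = gibbs \<beta> E i0}"

definition TP_orbit :: "real \<Rightarrow> ('n::finite \<Rightarrow> real) \<Rightarrow> 'n \<Rightarrow> real^'n \<Rightarrow> (real^'n) set" where
  "TP_orbit \<beta> E i0 p = {T *v p | T. T \<in> TP \<beta> E i0}"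

definition sum_one_hyperplane :: "(real^'n::finite) set" where
  "sum_one_hyperplane = {x. (\<Sum>i\<in>UNIV. x $ i) = 1}"

end

theory Submission
  imports Defs
begin

theorem mainTheorem6:
  fixes \<beta> :: real and E :: "'n::finite \<Rightarrow> real" and i0 :: 'n and p :: "real^'n"
  assumes "CARD('n) \<ge> 2"
    and "0 < \<beta>"
    and "inj E"
    and "E i0 = 0"
    and "is_state p"
    and "p \<noteq> gibbs \<beta> E i0"
  shows "\<exists>e>0. ball (gibbs \<beta> E i0) e \<inter> sum_one_hyperplane \<subseteq> TP_orbit \<beta> E i0 p"
proof -
  define g where "g = gibbs \<beta> E i0"
  have Zpos: "0 < partition_fn \<beta> E i0"
    unfolding partition_fn_def qfac_def by (intro sum_pos) auto
  have gpos: "\<And>i. 0 < g $ i"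
    using Zpos unfolding g_def gibbs_def qfac_def by simp
  have gsum: "(\<Sum>i\<in>UNIV. g $ i) = 1"
  proof -
    have "(\<Sum>i\<in>UNIV. g $ i) = (\<Sum>i\<in>UNIV. qfac \<beta> E i i0) / partition_fn \<beta> E i0"
      unfolding g_def gibbs_def by (simp add: sum_divide_distrib)
    also have "\<dots> = 1" using Zpos unfolding partition_fn_def by simp
    finally show ?thesis .
  qed
  have psum: "(\<Sum>i\<in>UNIV. p $ i) = 1" using assms(5) unfolding is_state_def by simp
  obtain k where k: "p $ k \<noteq> g $ k" using assms(6) unfolding g_def by (metis vec_eq_iff)
  define c where "c = p $ k / g $ k - 1"
  have c0: "c \<noteq> 0" using k gpos[of k] unfolding c_def by (auto simp: field_simps)
  define M where "M = 1 / g $ k + 1"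
  have Mpos: "M > 0" using gpos[of k] unfolding M_def by (simp add: add_pos_pos)
  define m where "m = Min (range (\<lambda>i. g $ i))"
  have mpos: "m > 0"
  proof -
    have "m \<in> range (\<lambda>i. g $ i)" unfolding m_def by (intro Min_in) auto
    then show ?thesis using gpos by auto
  qed
  have mle: "\<And>i. m \<le> g $ i" unfolding m_def by (intro Min_le) auto
  define v where "v = (\<lambda>j. (if j = k then 1 / g $ k else 0) - 1)"
  have vM: "\<And>j. \<bar>v j\<bar> \<le> M" unfolding v_def M_def using gpos[of k] by (auto simp: abs_le_iff)
  have vj: "\<And>j y. v j * y = (if j = k then y / g $ k else 0) - y"
    unfolding v_def by (auto simp: algebra_simps)
  have vg: "(\<Sum>j\<in>UNIV. v j * g $ j) = 0"
    using gpos[of k] gsum by (simp add: vj sum_subtractf)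
  have vp: "(\<Sum>j\<in>UNIV. v j * p $ j) = c"
    using psum by (simp add: vj sum_subtractf c_def)
  define e where "e = \<bar>c\<bar> * m / M"
  have epos: "e > 0" using c0 mpos Mpos unfolding e_def by simp
  show ?thesis
  proof (intro exI[of _ e] conjI epos subsetI)
    fix x assume x: "x \<in> ball (gibbs \<beta> E i0) e \<inter> sum_one_hyperplane"
    have xsum: "(\<Sum>i\<in>UNIV. x $ i) = 1" using x unfolding sum_one_hyperplane_def by simp
    have xd: "\<And>i. \<bar>x $ i - g $ i\<bar> < e"
    proof -
      fix i
      have "\<bar>x $ i - g $ i\<bar> = \<bar>(x - g) $ i\<bar>" by simp
      also have "\<dots> \<le> norm (x - g)" by (rule component_le_norm_cart)
      also have "\<dots> < e" using x unfolding g_def by (simp add: dist_norm norm_minus_commute)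
      finally show "\<bar>x $ i - g $ i\<bar> < e" .
    qed
    define u where "u = (\<lambda>i. (x $ i - g $ i) / c)"
    have usum: "(\<Sum>i\<in>UNIV. u i) = 0"
      using xsum gsum by (simp add: u_def sum_divide_distrib[symmetric] sum_subtractf)
    define T :: "real^'n^'n" where "T = (\<chi> i j. g $ i + u i * v j)"
    have Tnn: "\<forall>i j. 0 \<le> T $ i $ j"
    proof (intro allI)
      fix i j
      have "\<bar>u i * v j\<bar> = \<bar>x $ i - g $ i\<bar> / \<bar>c\<bar> * \<bar>v j\<bar>" by (simp add: u_def abs_mult)
      also have "\<dots> \<le> e / \<bar>c\<bar> * M"
        using xd[of i] vM[of j] c0 Mpos
        by (intro mult_mono divide_right_mono) auto
      also have "\<dots> = m" unfolding e_def using c0 Mpos by simp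
      finally have "\<bar>u i * v j\<bar> \<le> g $ i" using mle[of i] by simp
      then show "0 \<le> T $ i $ j" unfolding T_def by simp
    qed
    have Tcol: "\<forall>j. (\<Sum>i\<in>UNIV. T $ i $ j) = 1"
    proof
      fix j
      have "(\<Sum>i\<in>UNIV. T $ i $ j) = (\<Sum>i\<in>UNIV. g $ i) + (\<Sum>i\<in>UNIV. u i) * v j"
        unfolding T_def by (simp add: sum.distrib sum_distrib_right)
      then show "(\<Sum>i\<in>UNIV. T $ i $ j) = 1" using gsum usum by simp
    qed
    have Tg: "T *v g = g"
    proof (subst vec_eq_iff, intro allI)
      fix i
      have "(T *v g) $ i = g $ i * (\<Sum>j\<in>UNIV. g $ j) + u i * (\<Sum>j\<in>UNIV. v j * g $ j)"
        unfolding T_def matrix_vector_mult_def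
        by (simp add: algebra_simps sum.distrib sum_distrib_left)
      then show "(T *v g) $ i = g $ i" using gsum vg by simp
    qed
    have Tp: "T *v p = x"
    proof (subst vec_eq_iff, intro allI)
      fix i
      have "(T *v p) $ i = g $ i * (\<Sum>j\<in>UNIV. p $ j) + u i * (\<Sum>j\<in>UNIV. v j * p $ j)"
        unfolding T_def matrix_vector_mult_def
        by (simp add: algebra_simps sum.distrib sum_distrib_left)
      then show "(T *v p) $ i = x $ i" using psum vp c0 by (simp add: u_def)
    qed
    have "T \<in> TP \<beta> E i0" unfolding TP_def using Tnn Tcol Tg unfolding g_def by simp
    then show "x \<in> TP_orbit \<beta> E i0 p" unfolding TP_orbit_def using Tp by blast
  qed
qed

end
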